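(* For integers $n\ge m\ge k\ge0$, \[\Big(\frac nm\Big)^k\le\Big(\frac nm\Big)^k\exp\!\Big(\frac{n-m}{nm}\frac{k(k-1)}{2}\Big)\le\binom nk\Big/\binom mk\le\frac{\exp(n\,\mathrm H(k/n))}{\exp(m\,\mathrm H(k/m))}\le\Big(\frac nm\Big)^k e^{k^2/m}.\]
   Context: $\mathrm H(x)=x\log(1/x)+(1-x)\log(1/(1-x))$ is the binary entropy function with natural logarithm (with $\mathrm H(0)=0$). *)

theory Defs
  imports Complex_Main
begin

definition bin_entropy :: "real \<Rightarrow> real" where
  "bin_entropy x =
     (if x = 0 then 0 else x * ln (1 / x)) + (if x = 1 then 0 else (1 - x) * ln (1 / (1 - x)))"

end

theory Submission imports Defs begin

definition EE :: "nat \<Rightarrow> nat \<Rightarrow> real" where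
  "EE k n = (real n / real k) ^ k * (real n / real (n - k)) ^ (n - k)"

lemma EE_pos: "k \<le> n \<Longrightarrow> EE k n > 0"
  unfolding EE_def
  by (cases "k = 0"; cases "n = k") auto

lemma exp_EE: assumes "k \<le> n"
  shows "exp (real n * bin_entropy (real k / real n)) = EE k n"
proof -
  consider "k = 0" | "k = n" "k > 0" | "0 < k" "k < n" using assms by linarith
  then show ?thesis
  proof cases
    case 1 then show ?thesis by (cases "n = 0") (auto simp: EE_def bin_entropy_def)
  next
    case 2 then show ?thesis by (auto simp: EE_def bin_entropy_def)
  next
    case 3
    have n0: "real n > 0" using 3 by simp
    have x0: "real k / real n \<noteq> 0" "real k / real n \<noteq> 1" using 3 by (auto simp: field_simps)
    have e1: "1 / (real k / real n) = real n / real k" by simp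
    have e2: "1 - real k / real n = real (n - k) / real n" using 3 n0 by (simp add: field_simps of_nat_diff)
    have e3: "1 / (1 - real k / real n) = real n / real (n - k)" using e2 by simp
    have b: "bin_entropy (real k / real n) = real k / real n * ln (real n / real k)
       + (1 - real k / real n) * ln (real n / real (n - k))"
      unfolding bin_entropy_def using x0 by (simp only: e1 e3 if_False)
    have m1: "real n * (real k / real n) = real k" using n0 by simp
    have m2: "real n * (1 - real k / real n) = real (n - k)" using n0 e2 by simp
    have "real n * bin_entropy (real k / real n)
        = real k * ln (real n / real k) + real (n - k) * ln (real n / real (n - k))"
      unfolding b distrib_left mult.assoc[symmetric] m1 m2 ..
    also have "exp \<dots> = EE k n"
      unfolding EE_def exp_add exp_of_nat_mult using 3 by simp
    finally show ?thesis .
  qed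
qed


lemma aseq_step: "(1 + 1 / real j) ^ j \<le> (1 + 1 / real (Suc j)) ^ Suc j"
proof (cases "j = 0")
  case True then show ?thesis by simp
next
  case False
  define x where "x = real j"
  have x0: "x > 0" using False x_def by simp
  have "0 < 1 + (x * x + x * 2)" using x0 by (smt (verit) mult_pos_pos)
  have B: "1 + real (Suc j) * (- 1 / (x + 1) ^ 2) \<le> (1 + (- 1 / (x + 1) ^ 2)) ^ Suc j"
    by (rule Bernoulli_inequality) (use x0 in \<open>simp add: field_simps\<close>)
  have l: "1 + real (Suc j) * (- 1 / (x + 1) ^ 2) = x / (x + 1)"
  proof -
    have "real (Suc j) = x + 1" by (simp add: x_def)
    moreover have "0 < 1 + (x * x + x * 2)" using x0 by (smt (verit) mult_pos_pos)
    ultimately show ?thesis using x0 by (simp add: field_simps power2_eq_square)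
  qed
  have r: "1 + (- 1 / (x + 1) ^ 2) = (x / (x + 1)) * ((x + 2) / (x + 1))"
    using x0 \<open>0 < 1 + (x * x + x * 2)\<close> by (simp add: field_simps power2_eq_square)
  have l2: "x / (x + 1) = (x / (x + 1)) ^ Suc j * ((x + 1) / x) ^ j"
  proof -
    have "(x / (x + 1)) ^ j * ((x + 1) / x) ^ j = 1"
      unfolding power_mult_distrib[symmetric] using x0 by simp
    then show ?thesis by (simp add: mult.assoc)
  qed
  have "(x / (x + 1)) ^ Suc j * ((x + 1) / x) ^ j \<le> (x / (x + 1)) ^ Suc j * ((x + 2) / (x + 1)) ^ Suc j"
    using B unfolding l r power_mult_distrib by (subst (asm) l2)
  then have "((x + 1) / x) ^ j \<le> ((x + 2) / (x + 1)) ^ Suc j"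
    by (rule mult_left_le_imp_le) (use x0 in simp)
  moreover have "1 + 1 / real j = (x + 1) / x" "1 + 1 / real (Suc j) = (x + 2) / (x + 1)"
    using x0 by (simp_all add: x_def field_simps)
  ultimately show ?thesis by simp
qed

lemma aseq_mono: "j \<le> n \<Longrightarrow> (1 + 1 / real j) ^ j \<le> (1 + 1 / real n) ^ n"
  by (rule lift_Suc_mono_le[where f = "\<lambda>j. (1 + 1 / real j) ^ j"]) (use aseq_step in auto)


lemma EE_step:
  assumes "1 \<le> k" "k \<le> n"
  shows "real (Suc n) * EE k n \<le> real (Suc n - k) * EE k (Suc n)"
proof -
  define j where "j = n - k"
  have n0: "real n > 0" using assms by simp
  have sj: "Suc n - k = Suc j" using assms j_def by simp
  define R where "R = ((real n + 1) / real k) ^ k * ((real n + 1) / (real j + 1)) ^ j"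
  have I1: "((real n + 1) / real k) ^ k = (real n / real k) ^ k * (1 + 1 / real n) ^ k"
  proof -
    have "(real n + 1) / real k = real n / real k * (1 + 1 / real n)" using n0 assms by (simp add: field_simps)
    then show ?thesis by (simp only: power_mult_distrib)
  qed
  have I2: "((real n + 1) / (real j + 1)) ^ j * (1 + 1 / real j) ^ j = (real n / real j) ^ j * (1 + 1 / real n) ^ j"
  proof (cases "j = 0")
    case False
    have "(real n + 1) / (real j + 1) * (1 + 1 / real j) = real n / real j * (1 + 1 / real n)"
    proof -
      have "real j + 1 > 0" "real j > 0" "real j + real j * real j > 0" using False by (auto intro: add_pos_nonneg)
      then show ?thesis using n0 by (simp add: field_simps)
    qed
    then show ?thesis by (simp only: power_mult_distrib[symmetric])
  qed simp
  have A: "(1 + 1 / real j) ^ j \<le> (1 + 1 / real n) ^ k * (1 + 1 / real n) ^ j"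
    using aseq_mono[of j n] assms j_def by (simp add: power_add[symmetric])
  have apos: "(1 + 1 / real j) ^ j > 0" by (simp add: add_pos_nonneg)
  have EEn: "EE k n = (real n / real k) ^ k * (real n / real j) ^ j"
    unfolding EE_def j_def ..
  have "EE k n * (1 + 1 / real j) ^ j \<le> (real n / real k) ^ k * (real n / real j) ^ j * ((1 + 1 / real n) ^ k * (1 + 1 / real n) ^ j)"
    unfolding EEn by (rule mult_left_mono[OF A]) simp
  also have "\<dots> = R * (1 + 1 / real j) ^ j"
  proof -
    have "R * (1 + 1 / real j) ^ j = ((real n + 1) / real k) ^ k * (((real n + 1) / (real j + 1)) ^ j * (1 + 1 / real j) ^ j)"
      unfolding R_def by (simp only: mult.assoc)
    also have "\<dots> = (real n / real k) ^ k * (1 + 1 / real n) ^ k * ((real n / real j) ^ j * (1 + 1 / real n) ^ j)"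
      by (simp only: I1 I2)
    finally show ?thesis by (simp only: ac_simps)
  qed
  finally have ER: "EE k n \<le> R" using apos by simp
  have ES: "EE k (Suc n) = R * ((real n + 1) / (real j + 1))"
    unfolding EE_def sj R_def by (simp add: ac_simps)
  have "real (Suc n) * EE k n \<le> real (Suc n) * R" using ER by (rule mult_left_mono) simp
  also have "real (Suc n) * R = real (Suc j) * EE k (Suc n)"
    unfolding ES by (simp add: field_simps)
  finally show ?thesis by (simp only: sj)
qed


lemma D_step:
  assumes "1 \<le> k" "k \<le> n"
  shows "real (Suc n choose k) / EE k (Suc n) \<le> real (n choose k) / EE k n"
proof -
  define a where "a = real (n choose k)"
  define b where "b = real (Suc n choose k)"
  define p where "p = real (Suc n - k)"
  define q where "q = real (Suc n)"
  have p0: "p > 0" using assms p_def by simp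
  have a0: "a \<ge> 0" using a_def by simp
  have E1: "EE k n > 0" "EE k (Suc n) > 0" using assms by (auto intro: EE_pos)
  have bp: "b * p = q * a"
    using binomial_absorb_comp[of "Suc n" k] unfolding a_def b_def p_def q_def
    by (metis diff_Suc_1 mult.commute of_nat_mult)
  have st: "q * EE k n \<le> p * EE k (Suc n)" using EE_step[OF assms] p_def q_def by simp
  have "(b * EE k n) * p = a * (q * EE k n)" using bp by (simp add: ac_simps)
  also have "\<dots> \<le> a * (p * EE k (Suc n))" using mult_left_mono[OF st a0] .
  also have "\<dots> = (a * EE k (Suc n)) * p" by (simp add: ac_simps)
  finally have "b * EE k n \<le> a * EE k (Suc n)" using p0 by simp
  then show ?thesis unfolding a_def[symmetric] b_def[symmetric] using E1
    by (simp add: divide_simps)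
qed

lemma D_mono:
  assumes "1 \<le> k" "k \<le> m" "m \<le> n"
  shows "real (n choose k) / EE k n \<le> real (m choose k) / EE k m"
  using assms(3)
proof (induction n rule: dec_induct)
  case (step n)
  then show ?case using D_step[OF assms(1), of n] assms by linarith
qed simp

lemma ineq3:
  assumes "k \<le> m" "m \<le> n"
  shows "real (n choose k) / real (m choose k) \<le> EE k n / EE k m"
proof (cases "k = 0")
  case True
  then show ?thesis by (cases "n = 0"; cases "m = 0") (auto simp: EE_def)
next
  case False
  have D: "real (n choose k) / EE k n \<le> real (m choose k) / EE k m"
    using D_mono[of k m n] False assms by simp
  have p: "EE k n > 0" "EE k m > 0" "real (m choose k) > 0" using assms by (auto intro: EE_pos)
  show ?thesis using D p by (simp add: divide_simps mult.commute)
qed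


lemma upperU:
  assumes "k \<le> n"
  shows "(real n / real (n - k)) ^ (n - k) \<le> exp (real k)"
proof (cases "n = k")
  case False
  have d: "real (n - k) > 0" using assms False by simp
  have "real n / real (n - k) = 1 + real k / real (n - k)"
    using d assms by (simp add: field_simps of_nat_diff)
  also have "\<dots> \<le> exp (real k / real (n - k))" by (rule exp_ge_add_one_self)
  finally have "(real n / real (n - k)) ^ (n - k) \<le> exp (real k / real (n - k)) ^ (n - k)"
    by (rule power_mono) simp
  also have "\<dots> = exp (real (n - k) * (real k / real (n - k)))" by (simp only: exp_of_nat_mult)
  also have "real (n - k) * (real k / real (n - k)) = real k" using d by simp
  finally show ?thesis .
qed simp

lemma lowerL:
  assumes "k \<le> m" "0 < m"
  shows "exp (real k - real k ^ 2 / real m) \<le> (real m / real (m - k)) ^ (m - k)"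
proof (cases "m = k")
  case True
  then show ?thesis using assms by (simp add: power2_eq_square)
next
  case False
  have d: "real (m - k) > 0" using assms False by simp
  have m0: "real m > 0" using assms by simp
  have "1 + (- (real k / real m)) \<le> exp (- (real k / real m))" by (rule exp_ge_add_one_self)
  moreover have "1 + (- (real k / real m)) = real (m - k) / real m"
    using m0 assms by (simp add: field_simps of_nat_diff)
  ultimately have "real (m - k) / real m \<le> inverse (exp (real k / real m))"
    by (simp add: exp_minus)
  then have e: "exp (real k / real m) \<le> real m / real (m - k)"
    using d m0 by (simp add: field_simps)
  have "exp (real k - real k ^ 2 / real m) = exp (real (m - k) * (real k / real m))"
    using m0 assms by (simp add: field_simps of_nat_diff power2_eq_square)
  also have "\<dots> = exp (real k / real m) ^ (m - k)" by (simp only: exp_of_nat_mult)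
  also have "\<dots> \<le> (real m / real (m - k)) ^ (m - k)" using e by (rule power_mono) simp
  finally show ?thesis .
qed

lemma ineq4:
  assumes "k \<le> m" "m \<le> n"
  shows "EE k n / EE k m \<le> (real n / real m) ^ k * exp (real k ^ 2 / real m)"
proof (cases "k = 0")
  case True
  then show ?thesis by (cases "n = 0"; cases "m = 0") (auto simp: EE_def)
next
  case False
  have k0: "real k > 0" and m0: "real m > 0" using False assms by auto
  have "EE k n / EE k m \<le> ((real n / real k) ^ k * exp (real k))
      / ((real m / real k) ^ k * exp (real k - real k ^ 2 / real m))"
    unfolding EE_def
  proof (rule frac_le)
    show "0 \<le> (real n / real k) ^ k * exp (real k)" by simp
    show "(real n / real k) ^ k * (real n / real (n - k)) ^ (n - k) \<le> (real n / real k) ^ k * exp (real k)"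
      using upperU[of k n] assms by (intro mult_left_mono) auto
    show "0 < (real m / real k) ^ k * exp (real k - (real k)\<^sup>2 / real m)" using k0 m0 by simp
    show "(real m / real k) ^ k * exp (real k - (real k)\<^sup>2 / real m) \<le> (real m / real k) ^ k * (real m / real (m - k)) ^ (m - k)"
      using lowerL[of k m] assms m0 by (intro mult_left_mono) auto
  qed
  also have "\<dots> = (real n / real m) ^ k * exp (real k ^ 2 / real m)"
  proof -
    have "(real n / real k) ^ k / (real m / real k) ^ k = (real n / real m) ^ k"
      unfolding power_divide[symmetric] using k0 m0 by simp
    moreover have "exp (real k) / exp (real k - real k ^ 2 / real m) = exp (real k ^ 2 / real m)"
      by (simp add: exp_diff[symmetric])
    ultimately show ?thesis by (metis times_divide_times_eq)
  qed
  finally show ?thesis .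
qed


lemma factor_ineq:
  assumes "i < m" "m \<le> n"
  shows "real n / real m * exp (real i * ((real n - real m) / (real n * real m)))
           \<le> (real n - real i) / (real m - real i)"
proof -
  have m0: "real m > 0" and n0: "real n > 0" and mn: "real m \<le> real n" and im: "real i < real m"
    using assms by auto
  define a where "a = real i / real n"
  define b where "b = real i / real m"
  define t where "t = real i * ((real n - real m) / (real n * real m))"
  have tba: "t = b - a" unfolding t_def a_def b_def using m0 n0 by (simp add: field_simps)
  have a0: "a \<ge> 0" unfolding a_def by simp
  have t0: "t \<ge> 0" unfolding t_def using mn m0 n0 by simp
  have b1: "b < 1" unfolding b_def using im m0 by simp
  have a1: "a \<le> b" using t0 tba by simp
  have "1 + (- t) \<le> exp (- t)" by (rule exp_ge_add_one_self)
  then have "(1 - a) * (1 - t) \<le> (1 - a) * exp (- t)"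
    using a1 b1 by (intro mult_left_mono) auto
  moreover have "1 - b \<le> (1 - a) * (1 - t)" using tba a0 t0 by (simp add: algebra_simps)
  ultimately have "1 - b \<le> (1 - a) * exp (- t)" by linarith
  then have "exp t * (1 - b) \<le> 1 - a" by (simp add: exp_minus field_simps)
  then have e: "exp t \<le> (1 - a) / (1 - b)" using b1 by (simp add: field_simps)
  have eq: "(real n - real i) / (real m - real i) = real n / real m * ((1 - a) / (1 - b))"
    unfolding a_def b_def using m0 n0 im by (simp add: field_simps)
  have "real n / real m * exp t \<le> real n / real m * ((1 - a) / (1 - b))"
    by (rule mult_left_mono[OF e]) simp
  then show ?thesis unfolding t_def[symmetric] eq .
qed

lemma sum_real_lt: "(\<Sum>i\<in>{0..<k}. real i) = real k * (real k - 1) / 2"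
  by (induction k) (auto simp: field_simps)

lemma ineq2:
  assumes "k \<le> m" "m \<le> n"
  shows "(real n / real m) ^ k * exp ((real n - real m) / (real n * real m) * (real k * (real k - 1) / 2))
           \<le> real (n choose k) / real (m choose k)"
proof -
  define c where "c = (real n - real m) / (real n * real m)"
  have "(real n / real m) ^ k * exp (c * (real k * (real k - 1) / 2))
      = (\<Prod>i\<in>{0..<k}. real n / real m * exp (real i * c))"
  proof -
    have "(\<Prod>i\<in>{0..<k}. real n / real m * exp (real i * c))
        = (real n / real m) ^ k * (\<Prod>i\<in>{0..<k}. exp (real i * c))"
      by (simp only: prod.distrib prod_constant card_atLeastLessThan diff_zero)
    also have "(\<Prod>i\<in>{0..<k}. exp (real i * c)) = exp (\<Sum>i\<in>{0..<k}. real i * c)"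
      by (simp add: exp_sum)
    also have "(\<Sum>i\<in>{0..<k}. real i * c) = c * (real k * (real k - 1) / 2)"
      unfolding sum_distrib_right[symmetric] sum_real_lt by (simp only: mult.commute)
    finally show ?thesis by simp
  qed
  also have "\<dots> \<le> (\<Prod>i\<in>{0..<k}. (real n - real i) / (real m - real i))"
    using factor_ineq assms unfolding c_def by (intro prod_mono) auto
  also have "\<dots> = real (n choose k) / real (m choose k)"
  proof -
    have "real (n choose k) = (\<Prod>i\<in>{0..<k}. real (n - i)) / (\<Prod>i\<in>{0..<k}. real (k - i))"
      using binomial_altdef_of_nat[of k n] assms by (simp add: prod_dividef)
    moreover have "real (m choose k) = (\<Prod>i\<in>{0..<k}. real (m - i)) / (\<Prod>i\<in>{0..<k}. real (k - i))"
      using binomial_altdef_of_nat[of k m] assms by (simp add: prod_dividef)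
    moreover have "(\<Prod>i\<in>{0..<k}. real (k - i)) > 0" by (auto intro: prod_pos)
    moreover have "(\<Prod>i\<in>{0..<k}. real (m - i)) > 0" using assms by (auto intro: prod_pos)
    moreover have "(\<Prod>i\<in>{0..<k}. (real n - real i) / (real m - real i))
        = (\<Prod>i\<in>{0..<k}. real (n - i)) / (\<Prod>i\<in>{0..<k}. real (m - i))"
      using assms by (simp add: prod_dividef of_nat_diff)
    ultimately show ?thesis by simp
  qed
  finally show ?thesis unfolding c_def .
qed


theorem lemma6:
  fixes n m k :: nat
  assumes "n \<ge> m" and "m \<ge> k"
  shows "(real n / real m) ^ k
           \<le> (real n / real m) ^ k * exp ((real n - real m) / (real n * real m) * (real k * (real k - 1) / 2))
       \<and> (real n / real m) ^ k * exp ((real n - real m) / (real n * real m) * (real k * (real k - 1) / 2))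
           \<le> real (n choose k) / real (m choose k)
       \<and> real (n choose k) / real (m choose k)
           \<le> exp (real n * bin_entropy (real k / real n)) / exp (real m * bin_entropy (real k / real m))
       \<and> exp (real n * bin_entropy (real k / real n)) / exp (real m * bin_entropy (real k / real m))
           \<le> (real n / real m) ^ k * exp (real k ^ 2 / real m)"
proof (intro conjI)
  have k1: "real k * (real k - 1) \<ge> 0" by (cases k) auto
  have c0: "(real n - real m) / (real n * real m) \<ge> 0" using assms by simp
  have "1 \<le> exp ((real n - real m) / (real n * real m) * (real k * (real k - 1) / 2))"
  proof -
    have "0 \<le> (real n - real m) / (real n * real m) * (real k * (real k - 1) / 2)"
      using k1 c0 by (intro mult_nonneg_nonneg) auto
    then show ?thesis by simp
  qed
  then show "(real n / real m) ^ k
           \<le> (real n / real m) ^ k * exp ((real n - real m) / (real n * real m) * (real k * (real k - 1) / 2))"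
    using mult_left_mono[of 1 _ "(real n / real m) ^ k"] by simp
  show "(real n / real m) ^ k * exp ((real n - real m) / (real n * real m) * (real k * (real k - 1) / 2))
           \<le> real (n choose k) / real (m choose k)"
    using ineq2 assms by simp
  have en: "exp (real n * bin_entropy (real k / real n)) = EE k n" using assms by (intro exp_EE) simp
  have em: "exp (real m * bin_entropy (real k / real m)) = EE k m" using assms by (intro exp_EE) simp
  show "real (n choose k) / real (m choose k)
           \<le> exp (real n * bin_entropy (real k / real n)) / exp (real m * bin_entropy (real k / real m))"
    unfolding en em using ineq3 assms by simp
  show "exp (real n * bin_entropy (real k / real n)) / exp (real m * bin_entropy (real k / real m))
           \<le> (real n / real m) ^ k * exp (real k ^ 2 / real m)"
    unfolding en em using ineq4 assms by simp
qed

end
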